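(* Let $(\Phi,D)$ be a domain-free continuous information algebra. Then $(\Phi,D)$ is s-continuous if and only if for every directed subset $X\subseteq\Phi$ and every $x\in D$, $(\vee X)^{\Rightarrow x}=\bigvee_{\phi\in X}\phi^{\Rightarrow x}$.
   Context: A domain-free information algebra $(\Phi,D)$ consists of a set $\Phi$, a lattice $D$, a combination $\otimes$ and a focusing $(\psi,x)\mapsto\psi^{\Rightarrow x}$ ($x\in D$) such that: $\otimes$ is associative, commutative with neutral element $e$; $(\psi^{\Rightarrow y})^{\Rightarrow x}=\psi^{\Rightarrow x\wedge y}$; $(\phi^{\Rightarrow x}\otimes\psi)^{\Rightarrow x}=\phi^{\Rightarrow x}\otimes\psi^{\Rightarrow x}$; every $\psi$ has some $x$ with $\psi^{\Rightarrow x}=\psi$; $\psi\otimes\psi^{\Rightarrow x}=\psi$. Order: $\psi\le\phi$ iff $\psi\otimes\phi=\phi$; suprema refer to this order. $a\ll b$ means: for every directed $X$ with $b\le\vee X$ there is $c\in X$ with $a\le c$. $(\Phi,D)$, with $D$ having a top element, is continuous (resp. s-continuous) if there exists $\Gamma\subseteq\Phi$, closed under combination and containing $e$, such that every directed subset of $\Gamma$ has a supremum in $\Phi$ and $\phi=\vee\{\psi\in\Gamma:\psi\ll\phi\}$ for all $\phi\in\Phi$ (resp. $\phi^{\Rightarrow x}=\vee\{\psi\in\Gamma:\psi=\psi^{\Rightarrow x}\ll\phi\}$ for all $\phi\in\Phi$, $x\in D$). *)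

theory Defs
  imports Main
begin

text \<open>A domain-free information algebra: the set Phi is the carrier type 'a,
  D is a lattice 'd, comb is combination, e the neutral element and
  foc psi x stands for psi focused on x.\<close>

definition info_algebra ::
  "('a \<Rightarrow> 'a \<Rightarrow> 'a) \<Rightarrow> 'a \<Rightarrow> ('a \<Rightarrow> 'd::lattice \<Rightarrow> 'a) \<Rightarrow> bool" where
  "info_algebra comb e foc \<longleftrightarrow>
     (\<forall>a b c. comb (comb a b) c = comb a (comb b c)) \<and>
     (\<forall>a b. comb a b = comb b a) \<and>
     (\<forall>a. comb a e = a) \<and>
     (\<forall>\<psi> x y. foc (foc \<psi> y) x = foc \<psi> (inf x y)) \<and>
     (\<forall>\<phi> \<psi> x. foc (comb (foc \<phi> x) \<psi>) x = comb (foc \<phi> x) (foc \<psi> x)) \<and>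
     (\<forall>\<psi>. \<exists>x. foc \<psi> x = \<psi>) \<and>
     (\<forall>\<psi> x. comb \<psi> (foc \<psi> x) = \<psi>)"

definition ia_le :: "('a \<Rightarrow> 'a \<Rightarrow> 'a) \<Rightarrow> 'a \<Rightarrow> 'a \<Rightarrow> bool" where
  "ia_le comb \<psi> \<phi> \<longleftrightarrow> comb \<psi> \<phi> = \<phi>"

definition ia_is_sup :: "('a \<Rightarrow> 'a \<Rightarrow> 'a) \<Rightarrow> 'a set \<Rightarrow> 'a \<Rightarrow> bool" where
  "ia_is_sup comb X s \<longleftrightarrow> (\<forall>a\<in>X. ia_le comb a s) \<and>
     (\<forall>u. (\<forall>a\<in>X. ia_le comb a u) \<longrightarrow> ia_le comb s u)"

definition ia_directed :: "('a \<Rightarrow> 'a \<Rightarrow> 'a) \<Rightarrow> 'a set \<Rightarrow> bool" where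
  "ia_directed comb X \<longleftrightarrow> X \<noteq> {} \<and>
     (\<forall>a\<in>X. \<forall>b\<in>X. \<exists>c\<in>X. ia_le comb a c \<and> ia_le comb b c)"

definition ia_way_below :: "('a \<Rightarrow> 'a \<Rightarrow> 'a) \<Rightarrow> 'a \<Rightarrow> 'a \<Rightarrow> bool" where
  "ia_way_below comb a b \<longleftrightarrow>
     (\<forall>X s. ia_directed comb X \<longrightarrow> ia_is_sup comb X s \<longrightarrow> ia_le comb b s \<longrightarrow>
        (\<exists>c\<in>X. ia_le comb a c))"

definition ia_basis_pre :: "('a \<Rightarrow> 'a \<Rightarrow> 'a) \<Rightarrow> 'a \<Rightarrow> 'a set \<Rightarrow> bool" where
  "ia_basis_pre comb e \<Gamma> \<longleftrightarrow> (\<forall>a\<in>\<Gamma>. \<forall>b\<in>\<Gamma>. comb a b \<in> \<Gamma>) \<and> e \<in> \<Gamma> \<and>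
     (\<forall>X. X \<subseteq> \<Gamma> \<longrightarrow> ia_directed comb X \<longrightarrow> (\<exists>s. ia_is_sup comb X s))"

definition ia_continuous ::
  "('a \<Rightarrow> 'a \<Rightarrow> 'a) \<Rightarrow> 'a \<Rightarrow> ('a \<Rightarrow> 'd::bounded_lattice_top \<Rightarrow> 'a) \<Rightarrow> bool" where
  "ia_continuous comb e foc \<longleftrightarrow> info_algebra comb e foc \<and>
     (\<exists>\<Gamma>. ia_basis_pre comb e \<Gamma> \<and>
        (\<forall>\<phi>. ia_is_sup comb {\<psi>\<in>\<Gamma>. ia_way_below comb \<psi> \<phi>} \<phi>))"

definition ia_s_continuous ::
  "('a \<Rightarrow> 'a \<Rightarrow> 'a) \<Rightarrow> 'a \<Rightarrow> ('a \<Rightarrow> 'd::bounded_lattice_top \<Rightarrow> 'a) \<Rightarrow> bool" where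
  "ia_s_continuous comb e foc \<longleftrightarrow> info_algebra comb e foc \<and>
     (\<exists>\<Gamma>. ia_basis_pre comb e \<Gamma> \<and>
        (\<forall>\<phi> x. ia_is_sup comb {\<psi>\<in>\<Gamma>. foc \<psi> x = \<psi> \<and> ia_way_below comb \<psi> \<phi>} (foc \<phi> x)))"

end

theory Submission
  imports Defs
begin

locale ia =
  fixes comb :: "'a \<Rightarrow> 'a \<Rightarrow> 'a" and e :: 'a and foc :: "'a \<Rightarrow> 'd::lattice \<Rightarrow> 'a"
  assumes IA: "info_algebra comb e foc"
begin

lemma assoc: "comb (comb a b) c = comb a (comb b c)" using IA unfolding info_algebra_def by blast
lemma comm: "comb a b = comb b a" using IA unfolding info_algebra_def by blast
lemma neut: "comb a e = a" using IA unfolding info_algebra_def by blast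
lemma neut2: "comb e a = a" using neut comm by metis
lemma foc_foc: "foc (foc \<psi> y) x = foc \<psi> (inf x y)" using IA unfolding info_algebra_def by blast
lemma foc_ax: "foc (comb (foc \<phi> x) \<psi>) x = comb (foc \<phi> x) (foc \<psi> x)" using IA unfolding info_algebra_def by blast
lemma foc_ex: "\<exists>x. foc \<psi> x = \<psi>" using IA unfolding info_algebra_def by blast
lemma foc_abs: "comb \<psi> (foc \<psi> x) = \<psi>" using IA unfolding info_algebra_def by blast

lemma idem: "comb a a = a"
  using foc_ex[of a] foc_abs[of a] by metis

abbreviation le where "le \<equiv> ia_le comb"

lemma le_refl: "le a a" by (simp add: ia_le_def idem)
lemma le_trans: "le a b \<Longrightarrow> le b c \<Longrightarrow> le a c"
  unfolding ia_le_def by (metis assoc)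
lemma le_antisym: "le a b \<Longrightarrow> le b a \<Longrightarrow> a = b"
  unfolding ia_le_def by (metis comm)
lemma le_comb1: "le a (comb a b)"
  unfolding ia_le_def by (metis assoc idem)
lemma le_comb2: "le b (comb a b)"
  using le_comb1 comm by metis
lemma comb_least: "le a u \<Longrightarrow> le b u \<Longrightarrow> le (comb a b) u"
  unfolding ia_le_def by (metis assoc)
lemma e_le: "le e a" unfolding ia_le_def by (simp add: neut2)
lemma foc_le: "le (foc a x) a" unfolding ia_le_def by (metis comm foc_abs)
lemma foc_mono: assumes "le a b" shows "le (foc a x) (foc b x)"
proof -
  have b: "b = comb a b" using assms unfolding ia_le_def by simp
  have "comb (foc a x) (comb a b) = comb a b"
    by (metis assoc comm foc_abs)
  hence "foc (comb (foc a x) (comb a b)) x = foc b x" using b by simp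
  thus ?thesis unfolding ia_le_def using foc_ax b by metis
qed
lemma foc_idem: "foc (foc a x) x = foc a x" using foc_foc by simp

lemma sup_unique: "ia_is_sup comb X s \<Longrightarrow> ia_is_sup comb X t \<Longrightarrow> s = t"
  unfolding ia_is_sup_def using le_antisym by blast

abbreviation wb where "wb \<equiv> ia_way_below comb"

lemma wb_le: assumes "wb a b" shows "le a b"
proof -
  have "ia_directed comb {b}" unfolding ia_directed_def using le_refl by auto
  moreover have "ia_is_sup comb {b} b" unfolding ia_is_sup_def using le_refl by auto
  ultimately show ?thesis using assms le_refl unfolding ia_way_below_def by blast
qed

lemma wb_mono: "le a b \<Longrightarrow> wb b c \<Longrightarrow> wb a c"
  unfolding ia_way_below_def using le_trans by blast

lemma wb_e: "wb e b"
  unfolding ia_way_below_def ia_directed_def using e_le by blast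

lemma wb_comb: assumes "wb a c" "wb b c" shows "wb (comb a b) c"
  unfolding ia_way_below_def
proof (intro allI impI)
  fix X s assume d: "ia_directed comb X" and s: "ia_is_sup comb X s" and l: "le c s"
  obtain c1 where c1: "c1 \<in> X" "le a c1" using assms(1) d s l unfolding ia_way_below_def by blast
  obtain c2 where c2: "c2 \<in> X" "le b c2" using assms(2) d s l unfolding ia_way_below_def by blast
  obtain c3 where "c3 \<in> X" "le c1 c3" "le c2 c3" using d c1 c2 unfolding ia_directed_def by blast
  thus "\<exists>c\<in>X. le (comb a b) c" using c1 c2 comb_least le_trans by blast
qed

lemma dir_W:
  assumes "ia_basis_pre comb e \<Gamma>"
  shows "ia_directed comb {\<psi>\<in>\<Gamma>. wb \<psi> \<phi>}"
proof -
  have "e \<in> \<Gamma>" and cl: "\<And>a b. a \<in> \<Gamma> \<Longrightarrow> b \<in> \<Gamma> \<Longrightarrow> comb a b \<in> \<Gamma>"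
    using assms unfolding ia_basis_pre_def by auto
  then show ?thesis unfolding ia_directed_def using wb_e wb_comb le_comb1 le_comb2 by blast
qed

lemma dcpo:
  assumes B: "ia_basis_pre comb e \<Gamma>"
    and C: "\<forall>\<phi>. ia_is_sup comb {\<psi>\<in>\<Gamma>. wb \<psi> \<phi>} \<phi>"
    and Y: "ia_directed comb Y"
  shows "\<exists>z. ia_is_sup comb Y z"
proof -
  define Z where "Z = {\<gamma>\<in>\<Gamma>. \<exists>y\<in>Y. wb \<gamma> y}"
  have "e \<in> \<Gamma>" and cl: "\<And>a b. a \<in> \<Gamma> \<Longrightarrow> b \<in> \<Gamma> \<Longrightarrow> comb a b \<in> \<Gamma>"
    and ex: "\<And>X. X \<subseteq> \<Gamma> \<Longrightarrow> ia_directed comb X \<Longrightarrow> \<exists>s. ia_is_sup comb X s"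
    using B unfolding ia_basis_pre_def by auto
  have Zd: "ia_directed comb Z"
    unfolding ia_directed_def
  proof
    show "Z \<noteq> {}" using Y \<open>e \<in> \<Gamma>\<close> wb_e unfolding Z_def ia_directed_def by blast
    show "\<forall>a\<in>Z. \<forall>b\<in>Z. \<exists>c\<in>Z. le a c \<and> le b c"
    proof (intro ballI)
      fix a b assume a: "a \<in> Z" and b: "b \<in> Z"
      obtain y1 where y1: "y1 \<in> Y" "wb a y1" "a \<in> \<Gamma>" using a unfolding Z_def by blast
      obtain y2 where y2: "y2 \<in> Y" "wb b y2" "b \<in> \<Gamma>" using b unfolding Z_def by blast
      obtain y where y: "y \<in> Y" "le y1 y" "le y2 y" using Y y1 y2 unfolding ia_directed_def by blast
      have "wb a y" "wb b y" using y1 y2 y unfolding ia_way_below_def using le_trans by blast+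
      hence "comb a b \<in> Z" using y y1 y2 cl wb_comb unfolding Z_def by blast
      thus "\<exists>c\<in>Z. le a c \<and> le b c" using le_comb1 le_comb2 by blast
    qed
  qed
  obtain z where z: "ia_is_sup comb Z z" using ex[OF _ Zd] unfolding Z_def by blast
  have "ia_is_sup comb Y z"
    unfolding ia_is_sup_def
  proof (intro conjI ballI allI impI)
    fix y assume y: "y \<in> Y"
    have "\<forall>a\<in>{\<psi>\<in>\<Gamma>. wb \<psi> y}. le a z" using z y unfolding ia_is_sup_def Z_def by blast
    thus "le y z" using C unfolding ia_is_sup_def by blast
  next
    fix u assume u: "\<forall>a\<in>Y. le a u"
    have "\<forall>a\<in>Z. le a u" using u wb_le le_trans unfolding Z_def by blast
    thus "le z u" using z unfolding ia_is_sup_def by blast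
  qed
  thus ?thesis by blast
qed

end

theorem theorem3p11:
  fixes comb :: "'a \<Rightarrow> 'a \<Rightarrow> 'a" and e :: 'a
    and foc :: "'a \<Rightarrow> 'd::bounded_lattice_top \<Rightarrow> 'a"
  assumes "ia_continuous comb e foc"
  shows "ia_s_continuous comb e foc \<longleftrightarrow>
    (\<forall>X s x. ia_directed comb X \<longrightarrow> ia_is_sup comb X s \<longrightarrow>
        ia_is_sup comb ((\<lambda>\<phi>. foc \<phi> x) ` X) (foc s x))"
proof -
  have IA: "info_algebra comb e foc" using assms unfolding ia_continuous_def by blast
  interpret ia comb e foc by (rule ia.intro[OF IA])
  obtain \<Gamma> where B: "ia_basis_pre comb e \<Gamma>" and C: "\<forall>\<phi>. ia_is_sup comb {\<psi>\<in>\<Gamma>. wb \<psi> \<phi>} \<phi>"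
    using assms unfolding ia_continuous_def by blast
  show ?thesis
  proof
    assume "ia_s_continuous comb e foc"
    then obtain \<Delta> where S: "\<forall>\<phi> x. ia_is_sup comb {\<psi>\<in>\<Delta>. foc \<psi> x = \<psi> \<and> wb \<psi> \<phi>} (foc \<phi> x)"
      unfolding ia_s_continuous_def by blast
    show "\<forall>X s x. ia_directed comb X \<longrightarrow> ia_is_sup comb X s \<longrightarrow>
        ia_is_sup comb ((\<lambda>\<phi>. foc \<phi> x) ` X) (foc s x)"
    proof (intro allI impI)
      fix X s x assume d: "ia_directed comb X" and s: "ia_is_sup comb X s"
      show "ia_is_sup comb ((\<lambda>\<phi>. foc \<phi> x) ` X) (foc s x)"
        unfolding ia_is_sup_def
      proof (intro conjI ballI allI impI)
        fix a assume "a \<in> (\<lambda>\<phi>. foc \<phi> x) ` X"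
        thus "le a (foc s x)" using s foc_mono unfolding ia_is_sup_def by blast
      next
        fix u assume u: "\<forall>a\<in>(\<lambda>\<phi>. foc \<phi> x) ` X. le a u"
        have "\<forall>\<psi>\<in>{\<psi>\<in>\<Delta>. foc \<psi> x = \<psi> \<and> wb \<psi> s}. le \<psi> u"
        proof
          fix \<psi> assume p: "\<psi> \<in> {\<psi>\<in>\<Delta>. foc \<psi> x = \<psi> \<and> wb \<psi> s}"
          then obtain c where c: "c \<in> X" "le \<psi> c"
            using d s le_refl unfolding ia_way_below_def by blast
          have "le (foc \<psi> x) (foc c x)" using foc_mono c by blast
          thus "le \<psi> u" using p u c le_trans by force
        qed
        thus "le (foc s x) u" using S unfolding ia_is_sup_def by blast
      qed
    qed
  next
    assume H: "\<forall>X s x. ia_directed comb X \<longrightarrow> ia_is_sup comb X s \<longrightarrow>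
        ia_is_sup comb ((\<lambda>\<phi>. foc \<phi> x) ` X) (foc s x)"
    have BU: "ia_basis_pre comb e UNIV"
      unfolding ia_basis_pre_def using dcpo[OF B C] by blast
    have "\<forall>\<phi> x. ia_is_sup comb {\<psi>\<in>UNIV. foc \<psi> x = \<psi> \<and> wb \<psi> \<phi>} (foc \<phi> x)"
    proof (intro allI)
      fix \<phi> x
      have W: "ia_is_sup comb ((\<lambda>\<phi>. foc \<phi> x) ` {\<psi>\<in>\<Gamma>. wb \<psi> \<phi>}) (foc \<phi> x)"
        using H dir_W[OF B] C by blast
      show "ia_is_sup comb {\<psi>\<in>UNIV. foc \<psi> x = \<psi> \<and> wb \<psi> \<phi>} (foc \<phi> x)"
        unfolding ia_is_sup_def
      proof (intro conjI ballI allI impI)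
        fix a assume "a \<in> {\<psi>\<in>UNIV. foc \<psi> x = \<psi> \<and> wb \<psi> \<phi>}"
        hence "foc a x = a" "wb a \<phi>" by auto
        thus "le a (foc \<phi> x)" using foc_mono[OF wb_le, of a \<phi> x] by simp
      next
        fix u assume u: "\<forall>a\<in>{\<psi>\<in>UNIV. foc \<psi> x = \<psi> \<and> wb \<psi> \<phi>}. le a u"
        have "\<forall>a\<in>(\<lambda>\<phi>. foc \<phi> x) ` {\<psi>\<in>\<Gamma>. wb \<psi> \<phi>}. le a u"
        proof
          fix a assume "a \<in> (\<lambda>\<phi>. foc \<phi> x) ` {\<psi>\<in>\<Gamma>. wb \<psi> \<phi>}"
          then obtain \<gamma> where g: "wb \<gamma> \<phi>" "a = foc \<gamma> x" by blast
          have "wb a \<phi>" using g foc_le wb_mono by blast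
          moreover have "foc a x = a" using g foc_idem by simp
          ultimately show "le a u" using u by blast
        qed
        thus "le (foc \<phi> x) u" using W unfolding ia_is_sup_def by blast
      qed
    qed
    thus "ia_s_continuous comb e foc" using IA BU unfolding ia_s_continuous_def by blast
  qed
qed

end
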